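(* Fix $\nu\in(0,1]$, $k\in\mathbb{N}$, $\lambda_1,\dots,\lambda_k>0$, and let $M^\nu(t)$ be the counting process whose distribution $p_j^\nu(t)=\mathbb{P}\{M^\nu(t)=j\}$ solves the fractional system in the context with $p_0^\nu(0)=1$, $p_j^\nu(0)=0$ for $j\ge1$. Then for every $m\in\mathbb{N}$ and $t\ge0$, \[ \mathbb{E}\{[M^\nu(t)]^m\}=\sum_{r=0}^{m}\frac{t^{r\nu}}{\Gamma(r\nu+1)}\sum_{i_1+\dots+i_k=r}\binom{r}{i_1,\dots,i_k}\lambda_1^{i_1}\cdots\lambda_k^{i_k}\sum_{n_1+\dots+n_k=m}\binom{m}{n_1,\dots,n_k}\left[\frac{d^{n_1}}{ds^{n_1}}(e^{s}-1)^{i_1}\cdots\frac{d^{n_k}}{ds^{n_k}}(e^{ks}-1)^{i_k}\right]\Big|_{s=0}, \] with sums over nonnegative integers.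
   Context: Let $\Lambda=\lambda_1+\dots+\lambda_k$. Caputo derivative: for $0<\nu<1$, $\frac{d^\nu f(t)}{dt^\nu}=\frac{1}{\Gamma(1-\nu)}\int_0^t \frac{f'(s)}{(t-s)^{\nu}}\,ds$; for $\nu=1$ it is $f'(t)$. The system: $\frac{d^\nu p_0^\nu}{dt^\nu}=-\Lambda p_0^\nu$; $\frac{d^\nu p_j^\nu}{dt^\nu}=\sum_{r=1}^{j}\lambda_r p_{j-r}^\nu-\Lambda p_j^\nu$ for $j=1,\dots,k-1$; $\frac{d^\nu p_j^\nu}{dt^\nu}=\sum_{r=1}^{k}\lambda_r p_{j-r}^\nu-\Lambda p_j^\nu$ for $j\ge k$. *)

theory Defs
  imports "HOL-Analysis.Analysis"
begin

definition caputo :: "real \<Rightarrow> (real \<Rightarrow> real) \<Rightarrow> real \<Rightarrow> real" where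
  "caputo \<nu> f t =
     (if \<nu> = 1 then deriv f t
      else (1 / Gamma (1 - \<nu>)) * integral {0..t} (\<lambda>s. deriv f s / (t - s) powr \<nu>))"

text \<open>Tuples (i_1,...,i_k) of nonnegative integers with i_1+...+i_k = r,
  encoded as functions nat => nat supported on {1..k}.\<close>
definition compositions :: "nat \<Rightarrow> nat \<Rightarrow> (nat \<Rightarrow> nat) set" where
  "compositions k r = {i. (\<forall>l. l \<notin> {1..k} \<longrightarrow> i l = 0) \<and> (\<Sum>l=1..k. i l) = r}"

definition multinom :: "nat \<Rightarrow> nat \<Rightarrow> (nat \<Rightarrow> nat) \<Rightarrow> real" where
  "multinom k r i = fact r / (\<Prod>l=1..k. fact (i l))"

end

theory Submission
  imports Defs "HOL-Real_Asymp.Real_Asymp"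
begin


lemma comp_finite: "finite (compositions k r)"
proof -
  have "compositions k r \<subseteq> {f. \<forall>x. (x \<in> {1..k} \<longrightarrow> f x \<in> {..r}) \<and> (x \<notin> {1..k} \<longrightarrow> f x = 0)}"
  proof
    fix f assume "f \<in> compositions k r"
    then have z: "\<And>l. l \<notin> {1..k} \<Longrightarrow> f l = 0" and s: "(\<Sum>l=1..k. f l) = r"
      by (auto simp: compositions_def)
    have "f x \<le> r" if "x \<in> {1..k}" for x
      using member_le_sum[of x "{1..k}" f] that s by auto
    then show "f \<in> {f. \<forall>x. (x \<in> {1..k} \<longrightarrow> f x \<in> {..r}) \<and> (x \<notin> {1..k} \<longrightarrow> f x = 0)}"
      using z by auto
  qed
  thus ?thesis by (rule finite_subset) (rule finite_set_of_finite_funs, auto)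
qed

lemma comp_0: "compositions 0 m = (if m = 0 then {\<lambda>_. 0} else {})"
  by (auto simp: compositions_def)

lemma comp_Suc:
  "compositions (Suc k) m = (\<lambda>(a,n). n(Suc k := a)) ` (SIGMA a:{..m}. compositions k (m-a))"
proof (intro equalityI subsetI)
  fix f assume f: "f \<in> compositions (Suc k) m"
  have s: "(\<Sum>l=1..Suc k. f l) = m" and z: "\<And>l. l \<notin> {1..Suc k} \<Longrightarrow> f l = 0"
    using f by (auto simp: compositions_def)
  have "(\<Sum>l=1..Suc k. f l) = (\<Sum>l=1..k. f l) + f (Suc k)" by simp
  moreover have "(\<Sum>l=1..k. (f(Suc k := 0)) l) = (\<Sum>l=1..k. f l)" by (rule sum.cong) auto
  ultimately have "f(Suc k := 0) \<in> compositions k (m - f (Suc k))"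
    using s z by (auto simp: compositions_def)
  moreover have "f (Suc k) \<le> m" using s by simp
  ultimately show "f \<in> (\<lambda>(a,n). n(Suc k := a)) ` (SIGMA a:{..m}. compositions k (m-a))"
    by (auto intro!: image_eqI[where x="(f (Suc k), f(Suc k := 0))"])
next
  fix f assume "f \<in> (\<lambda>(a,n). n(Suc k := a)) ` (SIGMA a:{..m}. compositions k (m-a))"
  then obtain a n where a: "a \<le> m" and n: "n \<in> compositions k (m-a)" and f: "f = n(Suc k := a)" by auto
  have "(\<Sum>l=1..k. f l) = (\<Sum>l=1..k. n l)" unfolding f by (rule sum.cong) auto
  then show "f \<in> compositions (Suc k) m" using n a unfolding f
    by (auto simp: compositions_def)
qed

lemma comp_Suc_inj: "inj_on (\<lambda>(a,n). n(Suc k := a)) (SIGMA a:{..m}. compositions k (m-a))"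
proof (rule inj_onI, clarsimp)
  fix a n b n' assume "n \<in> compositions k (m - a)" "n' \<in> compositions k (m - b)"
    and e: "n(Suc k := a) = n'(Suc k := b)"
  then have "n (Suc k) = 0" "n' (Suc k) = 0" by (auto simp: compositions_def)
  moreover have "a = b" using fun_cong[OF e, of "Suc k"] by simp
  ultimately show "a = b \<and> n = n'" using e by (metis fun_upd_triv fun_upd_upd)
qed

lemma multinom_Suc:
  assumes "a \<le> m" "n \<in> compositions k (m-a)"
  shows "multinom (Suc k) m (n(Suc k := a)) = real (m choose a) * multinom k (m-a) n"
proof -
  have "(\<Prod>l=1..Suc k. fact ((n(Suc k := a)) l) :: real) = (\<Prod>l=1..k. fact (n l)) * fact a"
  proof -
    have "(\<Prod>l=1..Suc k. fact ((n(Suc k := a)) l) :: real) = (\<Prod>l=1..k. fact ((n(Suc k := a)) l)) * fact a"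
      by simp
    also have "(\<Prod>l=1..k. fact ((n(Suc k := a)) l) :: real) = (\<Prod>l=1..k. fact (n l))"
      by (rule prod.cong) auto
    finally show ?thesis .
  qed
  moreover have "(\<Prod>l=1..k. fact (n l) :: real) \<noteq> 0" by (simp add: prod_zero_iff)
  ultimately show ?thesis using assms(1)
    by (simp add: multinom_def binomial_fact field_simps)
qed

theorem multinomial:
  fixes x :: "nat \<Rightarrow> real"
  shows "(\<Sum>l=1..k. x l)^m = (\<Sum>n\<in>compositions k m. multinom k m n * (\<Prod>l=1..k. x l ^ n l))"
proof (induction k arbitrary: m)
  case 0
  then show ?case by (simp add: comp_0 multinom_def)
next
  case (Suc k)
  have "(\<Sum>l=1..Suc k. x l)^m = (x (Suc k) + (\<Sum>l=1..k. x l))^m" by (simp add: add.commute)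
  also have "\<dots> = (\<Sum>a\<le>m. real (m choose a) * x (Suc k)^a * (\<Sum>l=1..k. x l)^(m-a))"
    by (rule binomial_ring)
  also have "\<dots> = (\<Sum>a\<le>m. \<Sum>n\<in>compositions k (m-a).
        real (m choose a) * multinom k (m-a) n * ((\<Prod>l=1..k. x l ^ n l) * x (Suc k)^a))"
    unfolding Suc.IH by (simp add: sum_distrib_left sum_distrib_right mult_ac)
  also have "\<dots> = (\<Sum>(a,n)\<in>(SIGMA a:{..m}. compositions k (m-a)).
        real (m choose a) * multinom k (m-a) n * ((\<Prod>l=1..k. x l ^ n l) * x (Suc k)^a))"
    by (rule sum.Sigma) (auto simp: comp_finite)
  also have "\<dots> = (\<Sum>(a,n)\<in>(SIGMA a:{..m}. compositions k (m-a)).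
        multinom (Suc k) m (n(Suc k := a)) * (\<Prod>l=1..Suc k. x l ^ (n(Suc k := a)) l))"
  proof -
    have "real (m choose a) * multinom k (m-a) n * ((\<Prod>l=1..k. x l ^ n l) * x (Suc k)^a) =
        multinom (Suc k) m (n(Suc k := a)) * (\<Prod>l=1..Suc k. x l ^ (n(Suc k := a)) l)"
      if a: "a \<le> m" and n: "n \<in> compositions k (m-a)" for a n
    proof -
      have "(\<Prod>l=1..k. x l ^ (n(Suc k := a)) l) = (\<Prod>l=1..k. x l ^ n l)"
        by (rule prod.cong) auto
      then show ?thesis
        using multinom_Suc[OF a n] by simp
    qed
    then show ?thesis by (intro sum.cong) auto
  qed
  also have "\<dots> = (\<Sum>n\<in>compositions (Suc k) m. multinom (Suc k) m n * (\<Prod>l=1..Suc k. x l ^ n l))"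
    unfolding comp_Suc by (subst sum.reindex[OF comp_Suc_inj]) (simp add: case_prod_beta)
  finally show ?case .
qed



lemma EP:
  assumes "finite X"
  shows "(deriv ^^ n) (\<lambda>s. \<Sum>x\<in>X. w x * exp (e x * s)) = (\<lambda>s. \<Sum>x\<in>X. w x * e x ^ n * exp (e x * s))"
  using assms
proof (induction n arbitrary: w)
  case 0
  then show ?case by simp
next
  case (Suc n)
  have d: "deriv (\<lambda>s. \<Sum>x\<in>X. w x * exp (e x * s)) = (\<lambda>s. \<Sum>x\<in>X. (w x * e x) * exp (e x * s))"
  proof
    fix s
    show "deriv (\<lambda>s. \<Sum>x\<in>X. w x * exp (e x * s)) s = (\<Sum>x\<in>X. (w x * e x) * exp (e x * s))"
      by (rule DERIV_imp_deriv) (auto intro!: derivative_eq_intros simp: mult_ac)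
  qed
  show ?case
    by (simp only: funpow_Suc_right o_apply d Suc.IH[OF Suc.prems]) (simp add: mult_ac)
qed

lemma EP2:
  assumes "finite X" "finite Y"
  shows "(deriv ^^ n) (\<lambda>s. (\<Sum>x\<in>X. w x * exp (a x * s)) - (\<Sum>y\<in>Y. v y * exp (e y * s))) =
     (\<lambda>s. (\<Sum>x\<in>X. w x * a x ^ n * exp (a x * s)) - (\<Sum>y\<in>Y. v y * e y ^ n * exp (e y * s)))"
  using assms
proof (induction n arbitrary: w v)
  case 0
  then show ?case by simp
next
  case (Suc n)
  have d: "deriv (\<lambda>s. (\<Sum>x\<in>X. w x * exp (a x * s)) - (\<Sum>y\<in>Y. v y * exp (e y * s))) =
      (\<lambda>s. (\<Sum>x\<in>X. (w x * a x) * exp (a x * s)) - (\<Sum>y\<in>Y. (v y * e y) * exp (e y * s)))"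
  proof
    fix s
    show "deriv (\<lambda>s. (\<Sum>x\<in>X. w x * exp (a x * s)) - (\<Sum>y\<in>Y. v y * exp (e y * s))) s =
      (\<Sum>x\<in>X. (w x * a x) * exp (a x * s)) - (\<Sum>y\<in>Y. (v y * e y) * exp (e y * s))"
      by (rule DERIV_imp_deriv) (auto intro!: derivative_eq_intros simp: mult_ac)
  qed
  show ?case
    by (simp only: funpow_Suc_right o_apply d Suc.IH[OF Suc.prems]) (simp add: mult_ac)
qed



definition bco :: "nat \<Rightarrow> nat \<Rightarrow> real" where "bco i q = real (i choose q) * (-1)^(i-q)"

lemma expm1_pow: "(\<lambda>s. (exp (real l * s) - 1) ^ i) = (\<lambda>s. \<Sum>q\<in>{..i}. bco i q * exp (real (l*q) * s))"
proof
  fix s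
  have "(exp (real l * s) - 1) ^ i = (exp (real l * s) + (-1)) ^ i" by simp
  also have "\<dots> = (\<Sum>q\<le>i. real (i choose q) * exp (real l * s) ^ q * (-1) ^ (i - q))"
    by (rule binomial_ring)
  also have "\<dots> = (\<Sum>q\<in>{..i}. bco i q * exp (real (l*q) * s))"
  proof (rule sum.cong[OF refl])
    fix q
    have "exp (real l * s) ^ q = exp (real (l*q) * s)"
      by (simp add: exp_of_nat_mult[symmetric] mult_ac)
    then show "real (i choose q) * exp (real l * s) ^ q * (-1) ^ (i - q) = bco i q * exp (real (l*q) * s)"
      by (simp add: bco_def)
  qed
  finally show "(exp (real l * s) - 1) ^ i = (\<Sum>q\<in>{..i}. bco i q * exp (real (l*q) * s))" .
qed

lemma D_expm1: "(deriv^^n) (\<lambda>s. (exp (real l * s) - 1)^i) 0 = (\<Sum>q\<le>i. bco i q * real (l*q)^n)"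
  by (simp add: expm1_pow EP)

definition Gf :: "nat \<Rightarrow> (nat \<Rightarrow> real) \<Rightarrow> real \<Rightarrow> real" where
  "Gf k lam s = (\<Sum>l=1..k. lam l * (exp (real l * s) - 1))"
definition XX :: "nat \<Rightarrow> nat \<Rightarrow> ((nat \<Rightarrow> nat) \<times> (nat \<Rightarrow> nat)) set" where
  "XX k r = (SIGMA i:compositions k r. PiE {1..k} (\<lambda>l. {..i l}))"
definition WW :: "nat \<Rightarrow> (nat \<Rightarrow> real) \<Rightarrow> nat \<Rightarrow> (nat \<Rightarrow> nat) \<times> (nat \<Rightarrow> nat) \<Rightarrow> real" where
  "WW k lam r x = multinom k r (fst x) * (\<Prod>l=1..k. lam l ^ fst x l) * (\<Prod>l=1..k. bco (fst x l) (snd x l))"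
definition EE :: "nat \<Rightarrow> (nat \<Rightarrow> nat) \<times> (nat \<Rightarrow> nat) \<Rightarrow> real" where
  "EE k x = real (\<Sum>l=1..k. l * snd x l)"

lemma XX_finite: "finite (XX k r)"
  unfolding XX_def by (auto intro!: finite_SigmaI finite_PiE comp_finite)

lemma Gf_pow: "(\<lambda>s. Gf k lam s ^ r) = (\<lambda>s. \<Sum>x\<in>XX k r. WW k lam r x * exp (EE k x * s))"
proof
  fix s
  have "Gf k lam s ^ r = (\<Sum>i\<in>compositions k r. multinom k r i *
          (\<Prod>l=1..k. (lam l * (exp (real l * s) - 1)) ^ i l))"
    unfolding Gf_def by (rule multinomial)
  also have "\<dots> = (\<Sum>i\<in>compositions k r. \<Sum>g\<in>PiE {1..k} (\<lambda>l. {..i l}).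
          WW k lam r (i,g) * exp (EE k (i,g) * s))"
  proof (rule sum.cong[OF refl])
    fix i
    have "(\<Prod>l=1..k. (lam l * (exp (real l * s) - 1)) ^ i l) =
        (\<Prod>l=1..k. lam l ^ i l) * (\<Prod>l=1..k. (exp (real l * s) - 1) ^ i l)"
      by (simp add: power_mult_distrib prod.distrib)
    also have "(\<Prod>l=1..k. (exp (real l * s) - 1) ^ i l) =
        (\<Prod>l=1..k. \<Sum>q\<in>{..i l}. bco (i l) q * exp (real (l*q) * s))"
      by (simp add: expm1_pow[THEN fun_cong])
    also have "\<dots> = (\<Sum>g\<in>PiE {1..k} (\<lambda>l. {..i l}). \<Prod>l=1..k. bco (i l) (g l) * exp (real (l * g l) * s))"
      by (rule prod_sum_PiE) auto
    also have "\<dots> = (\<Sum>g\<in>PiE {1..k} (\<lambda>l. {..i l}). (\<Prod>l=1..k. bco (i l) (g l)) * exp (EE k (i,g) * s))"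
      by (simp add: prod.distrib EE_def exp_sum sum_distrib_right)
    finally show "multinom k r i * (\<Prod>l=1..k. (lam l * (exp (real l * s) - 1)) ^ i l) =
       (\<Sum>g\<in>PiE {1..k} (\<lambda>l. {..i l}). WW k lam r (i,g) * exp (EE k (i,g) * s))"
      by (simp add: WW_def sum_distrib_left mult_ac)
  qed
  also have "\<dots> = (\<Sum>x\<in>XX k r. WW k lam r x * exp (EE k x * s))"
    unfolding XX_def by (subst sum.Sigma) (auto simp: comp_finite case_prod_beta intro!: finite_PiE)
  finally show "Gf k lam s ^ r = (\<Sum>x\<in>XX k r. WW k lam r x * exp (EE k x * s))" .
qed

definition dG :: "nat \<Rightarrow> (nat \<Rightarrow> real) \<Rightarrow> nat \<Rightarrow> nat \<Rightarrow> real" where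
  "dG k lam r m = (deriv ^^ m) (\<lambda>s. Gf k lam s ^ r) 0"

lemma dG_sum: "dG k lam r m = (\<Sum>x\<in>XX k r. WW k lam r x * EE k x ^ m)"
  unfolding dG_def Gf_pow by (simp add: EP XX_finite)



definition cc :: "nat \<Rightarrow> (nat \<Rightarrow> real) \<Rightarrow> nat \<Rightarrow> nat \<Rightarrow> real" where
  "cc k lam r m = (\<Sum>i\<in>compositions k r. multinom k r i * (\<Prod>l=1..k. lam l ^ i l) *
           (\<Sum>n\<in>compositions k m. multinom k m n *
              (\<Prod>l=1..k. (deriv ^^ n l) (\<lambda>s. (exp (real l * s) - 1) ^ i l) 0)))"

lemma cc_dG: "cc k lam r m = dG k lam r m"
proof -
  have inner: "(\<Sum>n\<in>compositions k m. multinom k m n *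
              (\<Prod>l=1..k. (deriv ^^ n l) (\<lambda>s. (exp (real l * s) - 1) ^ i l) 0)) =
      (\<Sum>g\<in>PiE {1..k} (\<lambda>l. {..i l}). (\<Prod>l=1..k. bco (i l) (g l)) * EE k (i,g) ^ m)" for i
  proof -
    have "(\<Sum>n\<in>compositions k m. multinom k m n *
              (\<Prod>l=1..k. (deriv ^^ n l) (\<lambda>s. (exp (real l * s) - 1) ^ i l) 0)) =
        (\<Sum>n\<in>compositions k m. multinom k m n *
              (\<Prod>l=1..k. \<Sum>q\<in>{..i l}. bco (i l) q * real (l*q) ^ n l))"
      by (simp add: D_expm1)
    also have "\<dots> = (\<Sum>n\<in>compositions k m. multinom k m n *
          (\<Sum>g\<in>PiE {1..k} (\<lambda>l. {..i l}). \<Prod>l=1..k. bco (i l) (g l) * real (l * g l) ^ n l))"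
      by (subst prod_sum_PiE) auto
    also have "\<dots> = (\<Sum>n\<in>compositions k m. \<Sum>g\<in>PiE {1..k} (\<lambda>l. {..i l}).
          (\<Prod>l=1..k. bco (i l) (g l)) * (multinom k m n * (\<Prod>l=1..k. real (l * g l) ^ n l)))"
      by (simp add: sum_distrib_left prod.distrib mult_ac)
    also have "\<dots> = (\<Sum>g\<in>PiE {1..k} (\<lambda>l. {..i l}). (\<Prod>l=1..k. bco (i l) (g l)) *
          (\<Sum>n\<in>compositions k m. multinom k m n * (\<Prod>l=1..k. real (l * g l) ^ n l)))"
      by (subst sum.swap) (simp add: sum_distrib_left)
    also have "\<dots> = (\<Sum>g\<in>PiE {1..k} (\<lambda>l. {..i l}). (\<Prod>l=1..k. bco (i l) (g l)) * EE k (i,g) ^ m)"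
      using multinomial[of "\<lambda>l. real l * real (_ l)" k m]
      by (intro sum.cong refl) (simp add: EE_def)
    finally show ?thesis .
  qed
  have "cc k lam r m = (\<Sum>i\<in>compositions k r. \<Sum>g\<in>PiE {1..k} (\<lambda>l. {..i l}).
         WW k lam r (i,g) * EE k (i,g) ^ m)"
    unfolding cc_def inner by (simp add: WW_def sum_distrib_left mult_ac)
  also have "\<dots> = dG k lam r m"
    unfolding dG_sum XX_def by (subst sum.Sigma) (auto simp: comp_finite case_prod_beta intro!: finite_PiE)
  finally show ?thesis .
qed

lemma dG_0: "dG k lam 0 m = 0 ^ m"
proof -
  have e: "(\<lambda>s. Gf k lam s ^ 0) = (\<lambda>s. \<Sum>x\<in>{0::nat}. 1 * exp (0 * s))" by simp
  show ?thesis unfolding dG_def e by (subst EP) simp_all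
qed

definition kap :: "nat \<Rightarrow> (nat \<Rightarrow> real) \<Rightarrow> nat \<Rightarrow> nat \<Rightarrow> real" where
  "kap k lam m b = (\<Sum>l=1..k. lam l * real (m choose b) * real l ^ (m - b))"

lemma dG_Suc: "dG k lam (Suc r) m = (\<Sum>b<m. kap k lam m b * dG k lam r b)"
proof -
  let ?X = "{1..k} \<times> XX k r"
  have fin: "finite ?X" by (simp add: XX_finite)
  have "(\<lambda>s. Gf k lam s ^ Suc r) = (\<lambda>s. (\<Sum>y\<in>?X. (lam (fst y) * WW k lam r (snd y)) * exp ((real (fst y) + EE k (snd y)) * s))
        - (\<Sum>y\<in>?X. (lam (fst y) * WW k lam r (snd y)) * exp (EE k (snd y) * s)))"
  proof
    fix s
    have "Gf k lam s ^ Suc r = Gf k lam s * (\<Sum>x\<in>XX k r. WW k lam r x * exp (EE k x * s))"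
      using Gf_pow[of k lam r, THEN fun_cong, of s] by simp
    also have "\<dots> = (\<Sum>l=1..k. \<Sum>x\<in>XX k r. lam l * WW k lam r x * (exp ((real l + EE k x) * s) - exp (EE k x * s)))"
      unfolding Gf_def sum_distrib_right
      by (intro sum.cong refl) (simp add: sum_distrib_left distrib_right exp_add algebra_simps)
    also have "\<dots> = (\<Sum>y\<in>?X. lam (fst y) * WW k lam r (snd y) * (exp ((real (fst y) + EE k (snd y)) * s) - exp (EE k (snd y) * s)))"
      by (subst sum.cartesian_product) (simp add: case_prod_beta)
    finally show "Gf k lam s ^ Suc r = (\<Sum>y\<in>?X. (lam (fst y) * WW k lam r (snd y)) * exp ((real (fst y) + EE k (snd y)) * s))
        - (\<Sum>y\<in>?X. (lam (fst y) * WW k lam r (snd y)) * exp (EE k (snd y) * s))"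
      by (simp add: right_diff_distrib sum_subtractf)
  qed
  then have "dG k lam (Suc r) m = (\<Sum>y\<in>?X. lam (fst y) * WW k lam r (snd y) * ((real (fst y) + EE k (snd y)) ^ m - EE k (snd y) ^ m))"
    unfolding dG_def by (simp only: EP2[OF fin fin]) (simp add: sum_subtractf right_diff_distrib mult_ac)
  also have "\<dots> = (\<Sum>y\<in>?X. \<Sum>b<m. lam (fst y) * WW k lam r (snd y) * (real (m choose b) * EE k (snd y) ^ b * real (fst y) ^ (m - b)))"
  proof (rule sum.cong[OF refl])
    fix y
    have "(EE k (snd y) + real (fst y)) ^ m = (\<Sum>b\<le>m. real (m choose b) * EE k (snd y) ^ b * real (fst y) ^ (m - b))"
      by (rule binomial_ring)
    also have "\<dots> = (\<Sum>b<m. real (m choose b) * EE k (snd y) ^ b * real (fst y) ^ (m - b)) + EE k (snd y) ^ m"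
      by (simp add: lessThan_Suc_atMost[symmetric])
    finally show "lam (fst y) * WW k lam r (snd y) * ((real (fst y) + EE k (snd y)) ^ m - EE k (snd y) ^ m) =
        (\<Sum>b<m. lam (fst y) * WW k lam r (snd y) * (real (m choose b) * EE k (snd y) ^ b * real (fst y) ^ (m - b)))"
      by (simp add: add.commute sum_distrib_left)
  qed
  also have "\<dots> = (\<Sum>b<m. \<Sum>l=1..k. \<Sum>x\<in>XX k r. lam l * WW k lam r x * (real (m choose b) * EE k x ^ b * real l ^ (m - b)))"
    by (subst sum.swap) (intro sum.cong refl, simp add: sum.cartesian_product case_prod_beta)
  also have "\<dots> = (\<Sum>b<m. kap k lam m b * dG k lam r b)"
    unfolding kap_def dG_sum by (simp add: sum_distrib_left sum_distrib_right mult_ac)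
  finally show ?thesis .
qed

lemma dG_vanish: "m < r \<Longrightarrow> dG k lam r m = 0"
proof (induction r arbitrary: m)
  case 0 then show ?case by simp
next
  case (Suc r)
  then show ?case by (simp add: dG_Suc)
qed

lemma kap_nonneg: "(\<And>l. l \<in> {1..k} \<Longrightarrow> 0 \<le> lam l) \<Longrightarrow> 0 \<le> kap k lam m b"
  unfolding kap_def by (intro sum_nonneg) auto

lemma dG_nonneg: "(\<And>l. l \<in> {1..k} \<Longrightarrow> 0 \<le> lam l) \<Longrightarrow> 0 \<le> dG k lam r m"
proof (induction r arbitrary: m)
  case 0 then show ?case by (simp add: dG_0)
next
  case (Suc r)
  then show ?case by (auto simp: dG_Suc intro!: sum_nonneg mult_nonneg_nonneg kap_nonneg)
qed



definition cap_ok :: "real \<Rightarrow> (real \<Rightarrow> real) \<Rightarrow> real \<Rightarrow> bool" where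
  "cap_ok \<nu> f s \<longleftrightarrow> (\<forall>u\<in>{0<..s}. f differentiable (at u)) \<and>
      (\<nu> < 1 \<longrightarrow> (\<lambda>u. deriv f u / (s - u) powr \<nu>) integrable_on {0..s})"

lemma cap_sum:
  assumes nu1: "\<nu> \<le> 1" and fin: "finite I" and s: "0 < s" and ok: "\<And>i. i \<in> I \<Longrightarrow> cap_ok \<nu> (f i) s"
  shows "cap_ok \<nu> (\<lambda>x. \<Sum>i\<in>I. c i * f i x) s \<and>
         caputo \<nu> (\<lambda>x. \<Sum>i\<in>I. c i * f i x) s = (\<Sum>i\<in>I. c i * caputo \<nu> (f i) s)"
proof -
  have D: "DERIV (\<lambda>x. \<Sum>i\<in>I. c i * f i x) u :> (\<Sum>i\<in>I. c i * deriv (f i) u)" if u: "u \<in> {0<..s}" for u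
  proof -
    have "DERIV (f i) u :> deriv (f i) u" if "i \<in> I" for i
      using ok[OF that] u unfolding cap_ok_def DERIV_deriv_iff_real_differentiable by blast
    then show ?thesis by (auto intro!: derivative_eq_intros simp: mult.commute)
  qed
  then have dd: "deriv (\<lambda>x. \<Sum>i\<in>I. c i * f i x) u = (\<Sum>i\<in>I. c i * deriv (f i) u)" if "u \<in> {0<..s}" for u
    using that by (blast intro: DERIV_imp_deriv)
  have diff: "\<forall>u\<in>{0<..s}. (\<lambda>x. \<Sum>i\<in>I. c i * f i x) differentiable (at u)"
    using D real_differentiable_def by blast
  show ?thesis
  proof (cases "\<nu> < 1")
    case True
    have "((\<lambda>u. \<Sum>i\<in>I. c i * (deriv (f i) u / (s - u) powr \<nu>)) has_integral
             (\<Sum>i\<in>I. c i * integral {0..s} (\<lambda>u. deriv (f i) u / (s - u) powr \<nu>))) {0..s}"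
      using ok True unfolding cap_ok_def
      by (intro has_integral_sum fin has_integral_mult_right integrable_integral) auto
    then have "((\<lambda>u. \<Sum>i\<in>I. c i * (deriv (f i) u / (s - u) powr \<nu>)) has_integral
             (\<Sum>i\<in>I. c i * integral {0..s} (\<lambda>u. deriv (f i) u / (s - u) powr \<nu>))) {0<..<s}"
      by (simp add: has_integral_Icc_iff_Ioo)
    then have "((\<lambda>u. deriv (\<lambda>x. \<Sum>i\<in>I. c i * f i x) u / (s - u) powr \<nu>) has_integral
             (\<Sum>i\<in>I. c i * integral {0..s} (\<lambda>u. deriv (f i) u / (s - u) powr \<nu>))) {0<..<s}"
      by (rule has_integral_cong[THEN iffD1, rotated]) (simp add: dd sum_divide_distrib)
    then have I: "((\<lambda>u. deriv (\<lambda>x. \<Sum>i\<in>I. c i * f i x) u / (s - u) powr \<nu>) has_integral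
             (\<Sum>i\<in>I. c i * integral {0..s} (\<lambda>u. deriv (f i) u / (s - u) powr \<nu>))) {0..s}"
      by (simp add: has_integral_Icc_iff_Ioo)
    show ?thesis
      using True diff I unfolding cap_ok_def caputo_def
      by (auto simp: integral_unique sum_distrib_left mult_ac)
  next
    case False
    then have "\<nu> = 1" using nu1 by simp
    then show ?thesis using diff s dd[of s] unfolding cap_ok_def caputo_def
      by (auto simp: mult_ac)
  qed
qed

lemma cap_lin2:
  assumes nu1: "\<nu> \<le> 1" and s: "0 < s" and "cap_ok \<nu> f s" "cap_ok \<nu> g s"
  shows "cap_ok \<nu> (\<lambda>x. a * f x + b * g x) s \<and>
         caputo \<nu> (\<lambda>x. a * f x + b * g x) s = a * caputo \<nu> f s + b * caputo \<nu> g s"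
proof -
  have "cap_ok \<nu> (\<lambda>x. \<Sum>i\<in>{0::nat,1}. (if i = 0 then a else b) * (if i = 0 then f else g) x) s \<and>
         caputo \<nu> (\<lambda>x. \<Sum>i\<in>{0::nat,1}. (if i = 0 then a else b) * (if i = 0 then f else g) x) s =
          (\<Sum>i\<in>{0::nat,1}. (if i = 0 then a else b) * caputo \<nu> ((if i = 0 then f else g)) s)"
    by (rule cap_sum) (use assms in auto)
  then show ?thesis by simp
qed

lemma cap_const: "0 < s \<Longrightarrow> cap_ok \<nu> (\<lambda>x. c) s \<and> caputo \<nu> (\<lambda>x. c) s = 0"
  by (simp add: cap_ok_def caputo_def integrable_0)



lemma Beta_scaled:
  fixes a b s :: real
  assumes a: "0 < a" and b: "0 < b" and s: "0 < s"
  shows "((\<lambda>u. u powr (a - 1) * (s - u) powr (b - 1)) has_integral (s powr (a + b - 1) * Beta a b)) {0..s}"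
proof -
  let ?F = "\<lambda>t::real. t powr (a - 1) * (1 - t) powr (b - 1)"
  have "((\<lambda>x. ?F ((1/s) *\<^sub>R x + 0)) has_integral (1 / \<bar>1/s\<bar> ^ DIM(real)) *\<^sub>R Beta a b)
        ((\<lambda>x. (1 / (1/s)) *\<^sub>R x + - ((1 / (1/s)) *\<^sub>R 0)) ` cbox 0 1)"
    using has_integral_affinity[of ?F "Beta a b" 0 1 "1/s" 0] has_integral_Beta_real[OF a b] s by simp
  then have "((\<lambda>x. ?F (x / s)) has_integral (s * Beta a b)) {0..s}"
    using s by simp
  then have "((\<lambda>x. s powr (a + b - 2) * ?F (x / s)) has_integral (s powr (a + b - 2) * (s * Beta a b))) {0..s}"
    by (rule has_integral_mult_right)
  moreover have "s powr (a + b - 1) = s powr (a + b - 2) * s"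
  proof -
    have "s powr (a + b - 1) = s powr ((a + b - 2) + 1)" by simp
    also have "\<dots> = s powr (a + b - 2) * s" by (subst powr_add) (use s in simp)
    finally show ?thesis .
  qed
  ultimately have "((\<lambda>x. s powr (a + b - 2) * ?F (x / s)) has_integral (s powr (a + b - 1) * Beta a b)) {0<..<s}"
    by (simp add: has_integral_Icc_iff_Ioo mult.assoc)
  then have "((\<lambda>u. u powr (a - 1) * (s - u) powr (b - 1)) has_integral (s powr (a + b - 1) * Beta a b)) {0<..<s}"
  proof (rule has_integral_cong[THEN iffD1, rotated])
    fix x assume x: "x \<in> {0<..<s}"
    have "1 - x / s = (s - x) / s" using s by (simp add: field_simps)
    then have "?F (x / s) = x powr (a - 1) * (s - x) powr (b - 1) / (s powr (a - 1) * s powr (b - 1))"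
      by (simp add: powr_divide)
    also have "s powr (a - 1) * s powr (b - 1) = s powr (a + b - 2)"
      by (simp add: powr_add[symmetric])
    finally show "s powr (a + b - 2) * ?F (x / s) = x powr (a - 1) * (s - x) powr (b - 1)"
      using s by simp
  qed
  then show ?thesis by (simp add: has_integral_Icc_iff_Ioo)
qed

lemma cap_powr:
  assumes nu: "0 < \<nu>" "\<nu> \<le> 1" and al: "0 < \<alpha>" and s: "0 < s"
  shows "cap_ok \<nu> (\<lambda>u. u powr \<alpha>) s \<and>
     caputo \<nu> (\<lambda>u. u powr \<alpha>) s = Gamma (\<alpha> + 1) / Gamma (\<alpha> + 1 - \<nu>) * s powr (\<alpha> - \<nu>)"
proof -
  have D: "deriv (\<lambda>u. u powr \<alpha>) u = \<alpha> * u powr (\<alpha> - 1)" if "0 < u" for u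
    by (rule DERIV_imp_deriv) (rule has_real_derivative_powr[OF that])
  have diff: "\<forall>u\<in>{0<..s}. (\<lambda>u. u powr \<alpha>) differentiable (at u)"
    using has_real_derivative_powr real_differentiable_def by fastforce
  have Gp: "Gamma (\<alpha> + 1) = \<alpha> * Gamma \<alpha>"
    using al by (intro Gamma_plus1) (auto simp: nonpos_Ints_def)
  then have Gp': "Gamma (1 + \<alpha>) = \<alpha> * Gamma \<alpha>" by (simp add: add.commute)
  show ?thesis
  proof (cases "\<nu> < 1")
    case True
    have "((\<lambda>u. \<alpha> * (u powr (\<alpha> - 1) * (s - u) powr ((1 - \<nu>) - 1))) has_integral
        (\<alpha> * (s powr (\<alpha> + (1 - \<nu>) - 1) * Beta \<alpha> (1 - \<nu>)))) {0..s}"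
      by (intro has_integral_mult_right Beta_scaled) (use al True s in auto)
    then have "((\<lambda>u. \<alpha> * (u powr (\<alpha> - 1) * (s - u) powr ((1 - \<nu>) - 1))) has_integral
        (\<alpha> * (s powr (\<alpha> + (1 - \<nu>) - 1) * Beta \<alpha> (1 - \<nu>)))) {0<..<s}"
      by (simp add: has_integral_Icc_iff_Ioo)
    then have "((\<lambda>u. deriv (\<lambda>u. u powr \<alpha>) u / (s - u) powr \<nu>) has_integral
        (\<alpha> * (s powr (\<alpha> + (1 - \<nu>) - 1) * Beta \<alpha> (1 - \<nu>)))) {0<..<s}"
    proof (rule has_integral_cong[THEN iffD1, rotated])
      fix u assume u: "u \<in> {0<..<s}"
      show "\<alpha> * (u powr (\<alpha> - 1) * (s - u) powr ((1 - \<nu>) - 1)) = deriv (\<lambda>u. u powr \<alpha>) u / (s - u) powr \<nu>"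
        using u by (simp add: D powr_minus divide_inverse)
    qed
    then have I: "((\<lambda>u. deriv (\<lambda>u. u powr \<alpha>) u / (s - u) powr \<nu>) has_integral
        (\<alpha> * (s powr (\<alpha> - \<nu>) * Beta \<alpha> (1 - \<nu>)))) {0..s}"
      by (simp add: has_integral_Icc_iff_Ioo)
    have G1: "Gamma (1 - \<nu>) > 0" using True by simp
    have "caputo \<nu> (\<lambda>u. u powr \<alpha>) s = 1 / Gamma (1 - \<nu>) * (\<alpha> * (s powr (\<alpha> - \<nu>) * Beta \<alpha> (1 - \<nu>)))"
      using True I unfolding caputo_def by (simp add: integral_unique)
    also have "\<dots> = Gamma (\<alpha> + 1) / Gamma (\<alpha> + 1 - \<nu>) * s powr (\<alpha> - \<nu>)"
      using G1 by (simp add: Beta_def Gp Gp' field_simps)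
    finally show ?thesis using I diff True unfolding cap_ok_def by blast
  next
    case False
    then have n1: "\<nu> = 1" using nu by simp
    have "Gamma \<alpha> > 0" using al by simp
    then show ?thesis using diff s n1 unfolding cap_ok_def caputo_def
      by (simp add: D Gp)
  qed
qed

definition pw :: "real \<Rightarrow> nat \<Rightarrow> (nat \<Rightarrow> real) \<Rightarrow> real \<Rightarrow> real" where
  "pw \<nu> N a s = (\<Sum>r\<le>N. a r * ((s powr \<nu>) ^ r / Gamma (real r * \<nu> + 1)))"

lemma powr_pow_eq: "1 \<le> r \<Longrightarrow> (\<lambda>u::real. (u powr \<nu>) ^ r) = (\<lambda>u. u powr (real r * \<nu>))"
proof
  fix u :: real assume r: "1 \<le> r"
  show "(u powr \<nu>) ^ r = u powr (real r * \<nu>)"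
  proof (cases "u = 0")
    case True then show ?thesis using r by simp
  next
    case False then show ?thesis by (simp add: powr_power)
  qed
qed

lemma cap_div:
  assumes nu1: "\<nu> \<le> 1" and s: "0 < s" and ok: "cap_ok \<nu> f s"
  shows "cap_ok \<nu> (\<lambda>x. f x / c) s \<and> caputo \<nu> (\<lambda>x. f x / c) s = caputo \<nu> f s / c"
proof -
  have e: "(\<lambda>x. 1/c * f x + 0 * f x) = (\<lambda>x. f x / c)" by auto
  show ?thesis using cap_lin2[OF nu1 s ok ok, of "1/c" 0] unfolding e by simp
qed

lemma cap_term:
  assumes nu: "0 < \<nu>" "\<nu> \<le> 1" and s: "0 < s"
  shows "cap_ok \<nu> (\<lambda>u. (u powr \<nu>) ^ r / Gamma (real r * \<nu> + 1)) s \<and>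
     caputo \<nu> (\<lambda>u. (u powr \<nu>) ^ r / Gamma (real r * \<nu> + 1)) s =
       (if r = 0 then 0 else (s powr \<nu>) ^ (r - 1) / Gamma (real (r - 1) * \<nu> + 1))"
proof (cases r)
  case 0
  then show ?thesis using cap_const[OF s] by simp
next
  case (Suc r')
  have a: "0 < real r * \<nu>" using nu Suc by simp
  have e: "(\<lambda>u. (u powr \<nu>) ^ r / Gamma (real r * \<nu> + 1)) =
      (\<lambda>u. (1 / Gamma (real r * \<nu> + 1)) * u powr (real r * \<nu>) + 0 * u powr (real r * \<nu>))"
  proof -
    have "1 \<le> r" using Suc by simp
    from fun_cong[OF powr_pow_eq[OF this]] have pe: "(u powr \<nu>)^r = u powr (real r * \<nu>)" for u .
    show ?thesis by (rule ext) (simp add: pe)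
  qed
  have G: "Gamma (real r * \<nu> + 1) > 0" using a by simp
  have "real r * \<nu> + 1 - \<nu> = real r' * \<nu> + 1" using Suc by (simp add: algebra_simps)
  then have "Gamma (real r * \<nu> + 1 - \<nu>) = Gamma (real r' * \<nu> + 1)" by (simp only:)
  moreover have "s powr (real r * \<nu> - \<nu>) = (s powr \<nu>) ^ r'"
    using Suc s by (simp add: powr_power algebra_simps)
  ultimately show ?thesis
    unfolding e using cap_div[OF nu(2) s, of "\<lambda>u. u powr (real r * \<nu>)" "Gamma (real r * \<nu> + 1)"]
      cap_powr[OF nu a s] G Suc by simp
qed

lemma cap_pw:
  assumes nu: "0 < \<nu>" "\<nu> \<le> 1" and s: "0 < s"
  shows "cap_ok \<nu> (pw \<nu> N a) s \<and> caputo \<nu> (pw \<nu> N a) s = (if N = 0 then 0 else pw \<nu> (N - 1) (\<lambda>r. a (Suc r)) s)"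
proof -
  have "cap_ok \<nu> (\<lambda>x. \<Sum>r\<in>{..N}. a r * (\<lambda>u. (u powr \<nu>) ^ r / Gamma (real r * \<nu> + 1)) x) s \<and>
     caputo \<nu> (\<lambda>x. \<Sum>r\<in>{..N}. a r * (\<lambda>u. (u powr \<nu>) ^ r / Gamma (real r * \<nu> + 1)) x) s =
     (\<Sum>r\<in>{..N}. a r * caputo \<nu> (\<lambda>u. (u powr \<nu>) ^ r / Gamma (real r * \<nu> + 1)) s)"
    by (rule cap_sum) (use nu s cap_term in auto)
  moreover have "(\<Sum>r\<in>{..N}. a r * caputo \<nu> (\<lambda>u. (u powr \<nu>) ^ r / Gamma (real r * \<nu> + 1)) s) =
      (if N = 0 then 0 else pw \<nu> (N - 1) (\<lambda>r. a (Suc r)) s)"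
  proof (cases N)
    case 0 then show ?thesis using cap_term[OF nu s, of 0] by simp
  next
    case (Suc N')
    have "(\<Sum>r\<in>{..N}. a r * caputo \<nu> (\<lambda>u. (u powr \<nu>) ^ r / Gamma (real r * \<nu> + 1)) s) =
        (\<Sum>r\<in>{..N}. a r * (if r = 0 then 0 else (s powr \<nu>) ^ (r - 1) / Gamma (real (r - 1) * \<nu> + 1)))"
      using cap_term[OF nu s] by simp
    also have "\<dots> = (\<Sum>r\<le>N'. a (Suc r) * ((s powr \<nu>) ^ r / Gamma (real r * \<nu> + 1)))"
      unfolding Suc sum.atMost_Suc_shift by simp
    finally show ?thesis using Suc by (simp add: pw_def)
  qed
  ultimately show ?thesis unfolding pw_def by simp
qed



lemma cap_max:
  assumes nu: "0 < \<nu>" "\<nu> < 1" and s0: "0 < s0"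
    and cont: "continuous_on {0..s0} g" and ok: "cap_ok \<nu> g s0"
    and g0: "g 0 = 0" and Mpos: "0 < g s0" and mx: "\<And>u. u \<in> {0..s0} \<Longrightarrow> g u \<le> g s0"
  shows "0 < caputo \<nu> g s0"
proof -
  define M where "M = g s0"
  define f where "f = (\<lambda>u. deriv g u / (s0 - u) powr \<nu>)"
  have fint: "f integrable_on {0..s0}" using ok nu unfolding cap_ok_def f_def by auto
  have dg: "DERIV g u :> deriv g u" if "u \<in> {0<..s0}" for u
    using ok that unfolding cap_ok_def DERIV_deriv_iff_real_differentiable by blast
  define lo where "lo = (\<lambda>a. (g a - M) * (s0 - a) powr (-\<nu>) + M * s0 powr (-\<nu>))"
  have key: "lo a \<le> integral {0..a} f" if a: "a \<in> {0<..<s0}" for a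
  proof -
    define F where "F = (\<lambda>u. (g u - M) * (s0 - u) powr (-\<nu>))"
    define F' where "F' = (\<lambda>u. deriv g u * (s0 - u) powr (-\<nu>) + (g u - M) * (\<nu> * (s0 - u) powr (-\<nu> - 1)))"
    have "continuous_on {0..a} F"
      unfolding F_def using a
      by (intro continuous_intros continuous_on_subset[OF cont]) auto
    moreover have "(F has_vector_derivative F' u) (at u)" if u: "u \<in> {0<..<a}" for u
    proof -
      have "DERIV F u :> F' u"
        unfolding F_def F'_def using u a dg[of u]
        by (auto intro!: derivative_eq_intros simp: algebra_simps)
      then show ?thesis by (simp add: has_real_derivative_iff_has_vector_derivative)
    qed
    ultimately have FI: "(F' has_integral (F a - F 0)) {0..a}"
      using a by (intro fundamental_theorem_of_calculus_interior) auto
    have fI: "(f has_integral integral {0..a} f) {0..a}"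
      using integrable_subinterval_real[OF fint] a by (intro integrable_integral) auto
    have "F a - F 0 \<le> integral {0..a} f"
    proof (rule has_integral_le)
      show "(F' has_integral (F a - F 0)) {0<..<a}" using FI by (simp add: has_integral_Icc_iff_Ioo)
      show "(f has_integral integral {0..a} f) {0<..<a}" using fI by (simp add: has_integral_Icc_iff_Ioo)
      fix u assume u: "u \<in> {0<..<a}"
      have "(g u - M) * (\<nu> * (s0 - u) powr (-\<nu> - 1)) \<le> 0"
        using mx[of u] u a nu unfolding M_def by (intro mult_nonpos_nonneg) auto
      moreover have "f u = deriv g u * (s0 - u) powr (-\<nu>)"
        unfolding f_def by (simp add: powr_minus divide_inverse)
      ultimately show "F' u \<le> f u" unfolding F'_def by simp
    qed
    moreover have "F a - F 0 = lo a" unfolding F_def lo_def using g0 by simp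
    ultimately show ?thesis by simp
  qed
  have lim1: "((\<lambda>a. integral {0..a} f) \<longlongrightarrow> integral {0..s0} f) (at_left s0)"
  proof -
    have "continuous_on {0..s0} (\<lambda>a. integral {0..a} f)"
      by (rule indefinite_integral_continuous_1[OF fint])
    then have "((\<lambda>a. integral {0..a} f) \<longlongrightarrow> integral {0..s0} f) (at s0 within {0..s0})"
      using s0 by (simp add: continuous_on_def)
    then show ?thesis using at_within_Icc_at_left[OF s0] by simp
  qed
  have lim2: "(lo \<longlongrightarrow> 0 + M * s0 powr (-\<nu>)) (at_left s0)"
    unfolding lo_def
  proof (intro tendsto_add tendsto_const)
    have D: "((\<lambda>a. (g a - g s0) / (a - s0)) \<longlongrightarrow> deriv g s0) (at_left s0)"
      using dg[of s0] s0 unfolding has_field_derivative_iff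
      by (auto intro: tendsto_mono[OF at_le])
    have P: "((\<lambda>a. (s0 - a) powr (1 - \<nu>)) \<longlongrightarrow> 0) (at_left s0)"
      by (rule tendsto_zero_powrI) (auto intro!: tendsto_eq_intros eventually_at_leftI[of 0] simp: nu s0)
    have "((\<lambda>a. - ((g a - g s0) / (a - s0)) * (s0 - a) powr (1 - \<nu>)) \<longlongrightarrow> - deriv g s0 * 0) (at_left s0)"
      by (intro tendsto_mult tendsto_minus D P)
    moreover have "eventually (\<lambda>a. - ((g a - g s0) / (a - s0)) * (s0 - a) powr (1 - \<nu>) = (g a - M) * (s0 - a) powr (-\<nu>)) (at_left s0)"
      using eventually_at_left_real[OF s0]
    proof eventually_elim
      case (elim a)
      then have p: "0 < s0 - a" by simp
      have "(s0 - a) powr (1 - \<nu>) = (s0 - a) powr (1 + (-\<nu>))" by simp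
      also have "\<dots> = (s0 - a) powr 1 * (s0 - a) powr (-\<nu>)" by (rule powr_add)
      also have "\<dots> = (s0 - a) * (s0 - a) powr (-\<nu>)" using p by simp
      finally have pe: "(s0 - a) powr (1 - \<nu>) = (s0 - a) * (s0 - a) powr (-\<nu>)" .
      show ?case using p unfolding M_def pe by (simp add: field_simps)
    qed
    ultimately show "((\<lambda>a. (g a - M) * (s0 - a) powr (-\<nu>)) \<longlongrightarrow> 0) (at_left s0)"
      by (simp add: tendsto_cong)
  qed
  have "M * s0 powr (-\<nu>) \<le> integral {0..s0} f"
    using tendsto_le[OF trivial_limit_at_left_real lim1 lim2] key eventually_at_left_real[OF s0]
    by (simp add: eventually_mono)
  moreover have "0 < M * s0 powr (-\<nu>)" using Mpos s0 unfolding M_def by simp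
  moreover have "0 < Gamma (1 - \<nu>)" using nu by simp
  ultimately show ?thesis using nu unfolding caputo_def f_def by simp
qed



lemma CP:
  assumes nu: "0 < \<nu>" "\<nu> \<le> 1"
    and cont: "continuous_on {0..T} g" and g0: "g 0 = 0"
    and ok: "\<And>s. s \<in> {0<..T} \<Longrightarrow> cap_ok \<nu> g s"
    and le: "\<And>s. s \<in> {0<..T} \<Longrightarrow> caputo \<nu> g s \<le> 0"
    and s: "s \<in> {0..T}"
  shows "g s \<le> 0"
proof (cases "\<nu> < 1")
  case False
  then have n1: "\<nu> = 1" using nu by simp
  show ?thesis
  proof (cases "s = 0")
    case True then show ?thesis using g0 by simp
  next
    case False
    then have sp: "0 < s" using s by simp
    have "\<exists>l z. 0 < z \<and> z < s \<and> DERIV g z :> l \<and> g s - g 0 = (s - 0) * l"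
    proof (rule MVT[OF sp])
      show "continuous_on {0..s} g" using s by (intro continuous_on_subset[OF cont]) auto
      fix x assume "0 < x" "x < s"
      then show "g differentiable (at x)" using ok[of x] s unfolding cap_ok_def by auto
    qed
    then obtain l z where z: "0 < z" "z < s" and D: "DERIV g z :> l" and e: "g s - g 0 = (s - 0) * l"
      by blast
    have "l = caputo \<nu> g z" using D n1 unfolding caputo_def by (simp add: DERIV_imp_deriv)
    then have "l \<le> 0" using le[of z] z s by auto
    then show ?thesis using e g0 sp by (simp add: mult_nonneg_nonpos)
  qed
next
  case True
  show ?thesis
  proof (rule ccontr)
    assume "\<not> g s \<le> 0"
    then have gs: "0 < g s" by simp
    obtain s0 where s0: "s0 \<in> {0..T}" and mx: "\<And>y. y \<in> {0..T} \<Longrightarrow> g y \<le> g s0"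
      using continuous_attains_sup[OF compact_Icc _ cont] s by auto
    have M: "0 < g s0" using mx[OF s] gs by simp
    then have s0p: "0 < s0" using s0 g0 by (cases "s0 = 0") auto
    have "0 < caputo \<nu> g s0"
    proof (rule cap_max[OF nu(1) True s0p])
      show "continuous_on {0..s0} g" using s0 by (intro continuous_on_subset[OF cont]) auto
      show "cap_ok \<nu> g s0" using ok s0 s0p by auto
    qed (use g0 M mx s0 in auto)
    then show False using le[of s0] s0 s0p by auto
  qed
qed



lemma sum_shift_if:
  fixes J l :: nat
  shows "(\<Sum>j\<le>J. if l \<le> j then h j (j - l) else 0) = (\<Sum>i\<le>J. if i + l \<le> J then h (i + l) i else (0::real))"
proof -
  have "(\<Sum>j\<le>J. if l \<le> j then h j (j - l) else 0) = (\<Sum>j\<in>{j\<in>{..J}. l \<le> j}. h j (j - l))"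
    by (rule sum.inter_filter[symmetric]) simp
  also have "\<dots> = (\<Sum>i\<in>{i\<in>{..J}. i + l \<le> J}. h (i + l) i)"
    by (rule sum.reindex_bij_witness[where i="\<lambda>i. i + l" and j="\<lambda>j. j - l"]) auto
  also have "\<dots> = (\<Sum>i\<le>J. if i + l \<le> J then h (i + l) i else 0)"
    by (rule sum.inter_filter) simp
  finally show ?thesis .
qed

lemma binom_diff: "real (i + l) ^ m - real i ^ m = (\<Sum>a<m. real (m choose a) * real l ^ (m - a) * real i ^ a)"
proof -
  have "real (i + l) ^ m = (real i + real l) ^ m" by simp
  also have "\<dots> = (\<Sum>a\<le>m. real (m choose a) * real i ^ a * real l ^ (m - a))" by (rule binomial_ring)
  also have "\<dots> = (\<Sum>a<m. real (m choose a) * real l ^ (m - a) * real i ^ a) + real i ^ m"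
    by (simp add: lessThan_Suc_atMost[symmetric] mult_ac)
  finally show ?thesis by simp
qed

locale fsys =
  fixes \<nu> :: real and k :: nat and lam :: "nat \<Rightarrow> real" and p :: "nat \<Rightarrow> real \<Rightarrow> real"
  assumes nu: "0 < \<nu>" "\<nu> \<le> 1"
    and k: "1 \<le> k"
    and lam_pos: "\<And>l. l \<in> {1..k} \<Longrightarrow> 0 < lam l"
    and prob_nonneg: "\<And>j s. 0 \<le> s \<Longrightarrow> 0 \<le> p j s"
    and cont: "\<And>j. continuous_on {0..} (p j)"
    and diff: "\<And>j s. 0 < s \<Longrightarrow> p j differentiable (at s)"
    and integr: "\<And>j s. \<nu> < 1 \<Longrightarrow> 0 < s \<Longrightarrow>
                   (\<lambda>u. deriv (p j) u / (s - u) powr \<nu>) integrable_on {0..s}"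
    and eq0: "\<And>s. 0 < s \<Longrightarrow> caputo \<nu> (p 0) s = - (\<Sum>l=1..k. lam l) * p 0 s"
    and eq_low: "\<And>j s. 1 \<le> j \<Longrightarrow> j \<le> k - 1 \<Longrightarrow> 0 < s \<Longrightarrow>
                   caputo \<nu> (p j) s = (\<Sum>r=1..j. lam r * p (j - r) s) - (\<Sum>l=1..k. lam l) * p j s"
    and eq_high: "\<And>j s. k \<le> j \<Longrightarrow> 0 < s \<Longrightarrow>
                   caputo \<nu> (p j) s = (\<Sum>r=1..k. lam r * p (j - r) s) - (\<Sum>l=1..k. lam l) * p j s"
    and init0: "p 0 0 = 1"
    and initj: "\<And>j. 1 \<le> j \<Longrightarrow> p j 0 = 0"
begin

definition "Lam = (\<Sum>l=1..k. lam l)"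
definition "Q j s = (\<Sum>l=1..k. lam l * (if l \<le> j then p (j - l) s else 0)) - Lam * p j s"
definition "S J m s = (\<Sum>j\<in>{..J}. real j ^ m * p j s)"

lemma p_ok: "0 < s \<Longrightarrow> cap_ok \<nu> (p j) s"
  unfolding cap_ok_def using diff integr by auto

lemma p_eq: assumes s: "0 < s" shows "caputo \<nu> (p j) s = Q j s"
proof -
  consider "j = 0" | "1 \<le> j" "j \<le> k - 1" | "k \<le> j" by linarith
  then show ?thesis
  proof cases
    case 1 then show ?thesis using eq0[OF s] by (simp add: Q_def Lam_def)
  next
    case 2
    have "(\<Sum>l=1..k. lam l * (if l \<le> j then p (j - l) s else 0)) = (\<Sum>l\<in>{1..k}. if l \<le> j then lam l * p (j - l) s else 0)"
      by (intro sum.cong) auto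
    also have "\<dots> = (\<Sum>l\<in>{l\<in>{1..k}. l \<le> j}. lam l * p (j - l) s)"
      by (rule sum.inter_filter[symmetric]) simp
    also have "{l\<in>{1..k}. l \<le> j} = {1..j}" using 2 by auto
    finally show ?thesis using eq_low[OF 2 s] by (simp add: Q_def Lam_def)
  next
    case 3
    have "(\<Sum>l=1..k. lam l * (if l \<le> j then p (j - l) s else 0)) = (\<Sum>l=1..k. lam l * p (j - l) s)"
      using 3 by (intro sum.cong) auto
    then show ?thesis using eq_high[OF 3 s] by (simp add: Q_def Lam_def)
  qed
qed

lemma S_cap: assumes s: "0 < s"
  shows "cap_ok \<nu> (S J m) s \<and> caputo \<nu> (S J m) s = (\<Sum>j\<le>J. real j ^ m * Q j s)"
proof -
  have "cap_ok \<nu> (\<lambda>x. \<Sum>j\<in>{..J}. real j ^ m * p j x) s \<and>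
     caputo \<nu> (\<lambda>x. \<Sum>j\<in>{..J}. real j ^ m * p j x) s = (\<Sum>j\<in>{..J}. real j ^ m * caputo \<nu> (p j) s)"
    by (rule cap_sum) (use nu s p_ok in auto)
  then show ?thesis using p_eq[OF s] unfolding S_def[abs_def] by simp
qed

lemma SQ_eq: "(\<Sum>j\<le>J. real j ^ m * Q j s) =
   (\<Sum>l=1..k. lam l * ((\<Sum>i\<le>J. if i + l \<le> J then real (i + l) ^ m * p i s else 0) - S J m s))"
proof -
  have "(\<Sum>j\<le>J. real j ^ m * Q j s) =
     (\<Sum>l=1..k. lam l * (\<Sum>j\<le>J. if l \<le> j then real j ^ m * p (j - l) s else 0)) - Lam * S J m s"
    unfolding Q_def S_def
    by (simp add: right_diff_distrib sum_subtractf sum_distrib_left sum_distrib_right if_distrib mult_ac)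
       (subst sum.swap, simp add: sum_distrib_left mult_ac if_distrib cong: if_cong)
  also have "\<dots> = (\<Sum>l=1..k. lam l * ((\<Sum>i\<le>J. if i + l \<le> J then real (i + l) ^ m * p i s else 0) - S J m s))"
    by (simp add: sum_shift_if[where h="\<lambda>j i. real j ^ m * p i s"] Lam_def right_diff_distrib sum_subtractf sum_distrib_right)
  finally show ?thesis .
qed

end


context fsys begin

definition "kp = kap k lam"

lemma kp_nonneg: "0 \<le> kp m a"
  unfolding kp_def using lam_pos by (intro kap_nonneg) (auto intro: less_imp_le)

lemma Lam_nonneg: "0 \<le> Lam"
  unfolding Lam_def using lam_pos by (intro sum_nonneg) (auto intro: less_imp_le)

lemma kp_sum: "(\<Sum>l=1..k. lam l * (\<Sum>i\<le>J. (real (i + l) ^ m - real i ^ m) * p i s)) = (\<Sum>a<m. kp m a * S J a s)"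
proof -
  have "(\<Sum>l=1..k. lam l * (\<Sum>i\<le>J. (real (i + l) ^ m - real i ^ m) * p i s)) =
      (\<Sum>l=1..k. \<Sum>i\<le>J. \<Sum>a<m. lam l * (real (m choose a) * real l ^ (m - a) * real i ^ a) * p i s)"
    unfolding binom_diff by (simp add: sum_distrib_left sum_distrib_right mult_ac)
  also have "\<dots> = (\<Sum>l=1..k. \<Sum>a<m. \<Sum>i\<le>J. lam l * (real (m choose a) * real l ^ (m - a) * real i ^ a) * p i s)"
    by (rule sum.cong[OF refl]) (rule sum.swap)
  also have "\<dots> = (\<Sum>a<m. \<Sum>l=1..k. \<Sum>i\<le>J. lam l * (real (m choose a) * real l ^ (m - a) * real i ^ a) * p i s)"
    by (rule sum.swap)
  also have "\<dots> = (\<Sum>a<m. kp m a * S J a s)"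
    unfolding kp_def kap_def S_def by (simp add: sum_distrib_left sum_distrib_right mult_ac)
  finally show ?thesis .
qed

lemma S_upper: assumes s: "0 < s" shows "caputo \<nu> (S J m) s \<le> (\<Sum>a<m. kp m a * S J a s)"
proof -
  have "caputo \<nu> (S J m) s = (\<Sum>l=1..k. lam l * ((\<Sum>i\<le>J. if i + l \<le> J then real (i + l) ^ m * p i s else 0) - S J m s))"
    using S_cap[OF s] SQ_eq by simp
  also have "\<dots> \<le> (\<Sum>l=1..k. lam l * (\<Sum>i\<le>J. (real (i + l) ^ m - real i ^ m) * p i s))"
  proof (intro sum_mono mult_left_mono)
    fix l assume l: "l \<in> {1..k}"
    show "0 \<le> lam l" using lam_pos[OF l] by simp
    have "(\<Sum>i\<le>J. if i + l \<le> J then real (i + l) ^ m * p i s else 0) \<le> (\<Sum>i\<le>J. real (i + l) ^ m * p i s)"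
      using prob_nonneg[of s] s by (intro sum_mono) auto
    then show "(\<Sum>i\<le>J. if i + l \<le> J then real (i + l) ^ m * p i s else 0) - S J m s \<le>
        (\<Sum>i\<le>J. (real (i + l) ^ m - real i ^ m) * p i s)"
      unfolding S_def by (simp add: left_diff_distrib sum_subtractf)
  qed
  finally show ?thesis using kp_sum by simp
qed

definition "Tl J m s = (\<Sum>i\<le>J. if J < i + k then real (i + k) ^ m * p i s else 0)"

lemma S_lower: assumes s: "0 < s" shows "(\<Sum>a<m. kp m a * S J a s) - Lam * Tl J m s \<le> caputo \<nu> (S J m) s"
proof -
  have "(\<Sum>a<m. kp m a * S J a s) - Lam * Tl J m s =
      (\<Sum>l=1..k. lam l * ((\<Sum>i\<le>J. (real (i + l) ^ m - real i ^ m) * p i s) - Tl J m s))"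
    using kp_sum by (simp add: Lam_def right_diff_distrib sum_subtractf sum_distrib_right)
  also have "\<dots> \<le> (\<Sum>l=1..k. lam l * ((\<Sum>i\<le>J. if i + l \<le> J then real (i + l) ^ m * p i s else 0) - S J m s))"
  proof (intro sum_mono mult_left_mono)
    fix l assume l: "l \<in> {1..k}"
    show "0 \<le> lam l" using lam_pos[OF l] by simp
    have "(\<Sum>i\<le>J. real (i + l) ^ m * p i s) - (\<Sum>i\<le>J. if i + l \<le> J then real (i + l) ^ m * p i s else 0)
        = (\<Sum>i\<le>J. if J < i + l then real (i + l) ^ m * p i s else 0)"
      by (simp add: sum_subtractf[symmetric]) (intro sum.cong, auto)
    also have "\<dots> \<le> Tl J m s"
      unfolding Tl_def
    proof (intro sum_mono)
      fix i
      have "real (i + l) ^ m * p i s \<le> real (i + k) ^ m * p i s"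
        using l prob_nonneg[of s i] s by (intro mult_right_mono power_mono) auto
      then show "(if J < i + l then real (i + l) ^ m * p i s else 0) \<le> (if J < i + k then real (i + k) ^ m * p i s else 0)"
        using l prob_nonneg[of s i] s by auto
    qed
    finally show "(\<Sum>i\<le>J. (real (i + l) ^ m - real i ^ m) * p i s) - Tl J m s \<le>
        (\<Sum>i\<le>J. if i + l \<le> J then real (i + l) ^ m * p i s else 0) - S J m s"
      unfolding S_def by (simp add: left_diff_distrib sum_subtractf)
  qed
  also have "\<dots> = caputo \<nu> (S J m) s"
    using S_cap[OF s] SQ_eq by simp
  finally show ?thesis .
qed

lemma Tl_bound: assumes J: "k \<le> J" and s: "0 \<le> s"
  shows "Tl J m s \<le> real (k + 1) ^ m / (real J + 1 - real k) * S J (Suc m) s"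
proof -
  have D: "0 < real J + 1 - real k" using J by simp
  have "Tl J m s \<le> (\<Sum>i\<le>J. real (k + 1) ^ m / (real J + 1 - real k) * (real i ^ Suc m * p i s))"
    unfolding Tl_def
  proof (intro sum_mono)
    fix i assume i: "i \<in> {..J}"
    show "(if J < i + k then real (i + k) ^ m * p i s else 0) \<le> real (k + 1) ^ m / (real J + 1 - real k) * (real i ^ Suc m * p i s)"
    proof (cases "J < i + k")
      case True
      then have i1: "1 \<le> i" and iJ: "real J + 1 - real k \<le> real i" using J by auto
      have "real k * 1 \<le> real k * real i" using i1 by (intro mult_left_mono) auto
      then have "real (i + k) \<le> real (k + 1) * real i" by (simp add: algebra_simps)
      then have "real (i + k) ^ m \<le> (real (k + 1) * real i) ^ m" by (intro power_mono) auto
      also have "\<dots> = real (k + 1) ^ m * real i ^ m" by (simp add: power_mult_distrib)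
      also have "\<dots> \<le> real (k + 1) ^ m * (real i ^ Suc m / (real J + 1 - real k))"
      proof (intro mult_left_mono)
        have "real i ^ m * (real J + 1 - real k) \<le> real i ^ m * real i"
          using iJ by (intro mult_left_mono) auto
        then show "real i ^ m \<le> real i ^ Suc m / (real J + 1 - real k)"
          using D by (simp add: field_simps)
      qed simp
      finally have "real (i + k) ^ m * p i s \<le> real (k + 1) ^ m * (real i ^ Suc m / (real J + 1 - real k)) * p i s"
        using prob_nonneg[OF s, of i] by (intro mult_right_mono) auto
      then show ?thesis using True by (simp add: field_simps)
    next
      case False
      then show ?thesis using D prob_nonneg[OF s, of i] by simp
    qed
  qed
  also have "\<dots> = real (k + 1) ^ m / (real J + 1 - real k) * S J (Suc m) s"
    unfolding S_def by (simp add: sum_distrib_left)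
  finally show ?thesis .
qed

definition "Mo a = pw \<nu> a (\<lambda>r. dG k lam r a)"

lemma Mo_cap: assumes s: "0 < s"
  shows "cap_ok \<nu> (Mo m) s \<and> caputo \<nu> (Mo m) s = (\<Sum>b<m. kp m b * Mo b s)"
proof (cases m)
  case 0
  then show ?thesis using cap_pw[OF nu s] unfolding Mo_def by simp
next
  case (Suc N)
  have "caputo \<nu> (Mo m) s = pw \<nu> N (\<lambda>r. dG k lam (Suc r) m) s"
    using cap_pw[OF nu s, of m "\<lambda>r. dG k lam r m"] Suc unfolding Mo_def by simp
  also have "\<dots> = (\<Sum>r\<le>N. dG k lam (Suc r) m * ((s powr \<nu>) ^ r / Gamma (real r * \<nu> + 1)))"
    unfolding pw_def ..
  also have "\<dots> = (\<Sum>r\<le>N. \<Sum>b<m. kp m b * (dG k lam r b * ((s powr \<nu>) ^ r / Gamma (real r * \<nu> + 1))))"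
    by (simp add: dG_Suc kp_def sum_distrib_right sum_distrib_left sum_divide_distrib mult_ac)
  also have "\<dots> = (\<Sum>b<m. kp m b * (\<Sum>r\<le>N. dG k lam r b * ((s powr \<nu>) ^ r / Gamma (real r * \<nu> + 1))))"
    by (subst sum.swap) (simp add: sum_distrib_left)
  also have "\<dots> = (\<Sum>b<m. kp m b * Mo b s)"
  proof (intro sum.cong refl arg_cong[where f="\<lambda>x. kp m _ * x"])
    fix b assume b: "b \<in> {..<m}"
    show "(\<Sum>r\<le>N. dG k lam r b * ((s powr \<nu>) ^ r / Gamma (real r * \<nu> + 1))) = Mo b s"
      unfolding Mo_def pw_def
      by (rule sum.mono_neutral_left[symmetric]) (use b Suc dG_vanish in auto)
  qed
  finally show ?thesis using cap_pw[OF nu s, of m] unfolding Mo_def by simp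
qed

lemma Mo_0: "Mo a 0 = 0 ^ a"
  unfolding Mo_def pw_def using nu by (simp add: power_0_left dG_0 sum.atMost_shift)

lemma S_0: "S J m 0 = 0 ^ m"
  unfolding S_def using initj init0 by (simp add: sum.atMost_shift)

lemma powr_cont: "continuous_on {0..} (\<lambda>x::real. x powr \<nu>)"
  using nu by (intro continuous_on_powr' continuous_intros) auto

lemma Gnz: "0 < Gamma (real r * \<nu> + 1)"
proof -
  have "0 \<le> real r * \<nu>" using nu by simp
  then have "0 < real r * \<nu> + 1" by linarith
  then show ?thesis by (rule Gamma_real_pos)
qed

lemma Mo_cont: "continuous_on {0..} (Mo a)"
  unfolding Mo_def pw_def[abs_def] using Gnz
  by (intro continuous_on_sum continuous_on_mult continuous_on_const continuous_on_divide
      continuous_on_power powr_cont) (auto simp: less_imp_neq[symmetric])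

lemma S_cont: "continuous_on {0..} (S J m)"
  unfolding S_def[abs_def] by (intro continuous_intros cont)

lemma Mo_mono: assumes "0 \<le> s" "s \<le> T" shows "0 \<le> Mo a s" "Mo a s \<le> Mo a T"
proof -
  have dn: "0 \<le> dG k lam r a" for r using lam_pos by (intro dG_nonneg) (auto intro: less_imp_le)
  show "0 \<le> Mo a s" unfolding Mo_def pw_def using dn Gnz by (intro sum_nonneg mult_nonneg_nonneg divide_nonneg_pos) auto
  show "Mo a s \<le> Mo a T" unfolding Mo_def pw_def using dn assms nu Gnz less_imp_le[OF Gnz]
    by (intro sum_mono mult_left_mono divide_right_mono power_mono powr_mono2) auto
qed

end


context fsys begin

lemma S_le_Mo: "0 \<le> s \<Longrightarrow> S J m s \<le> Mo m s"
proof (induction m arbitrary: s rule: less_induct)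
  case (less m)
  define g where "g = (\<lambda>x. 1 * S J m x + (-1) * Mo m x)"
  have okg: "cap_ok \<nu> g x \<and> caputo \<nu> g x = caputo \<nu> (S J m) x - caputo \<nu> (Mo m) x" if "0 < x" for x
    unfolding g_def using cap_lin2[OF nu(2) that, of "S J m" "Mo m" 1 "-1"] S_cap[OF that] Mo_cap[OF that] by simp
  have "g s \<le> 0"
  proof (rule CP[OF nu, of s g s])
    show "continuous_on {0..s} g" unfolding g_def
      by (intro continuous_intros continuous_on_subset[OF S_cont] continuous_on_subset[OF Mo_cont]) auto
    show "g 0 = 0" unfolding g_def by (simp add: S_0 Mo_0)
    fix x assume x: "x \<in> {0<..s}"
    show "cap_ok \<nu> g x" using okg x by auto
    have "caputo \<nu> g x \<le> (\<Sum>a<m. kp m a * S J a x) - (\<Sum>a<m. kp m a * Mo a x)"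
      using okg[of x] x S_upper[of x J m] Mo_cap[of x m] by auto
    also have "\<dots> = (\<Sum>a<m. kp m a * (S J a x - Mo a x))"
      by (simp add: right_diff_distrib sum_subtractf)
    also have "\<dots> \<le> 0"
      using less.IH x by (intro sum_nonpos mult_nonneg_nonpos kp_nonneg) auto
    finally show "caputo \<nu> g x \<le> 0" .
  qed (use less.prems in auto)
  then show ?case unfolding g_def by simp
qed

lemma lower:
  assumes T: "0 \<le> T"
  shows "\<exists>\<delta>. \<delta> \<longlonglongrightarrow> 0 \<and> (\<forall>J. 0 \<le> \<delta> J) \<and> (\<forall>J\<ge>k. \<forall>s\<in>{0..T}. Mo m s - S J m s \<le> \<delta> J)"
proof (induction m rule: less_induct)
  case (less m)
  then have "\<forall>a\<in>{..<m}. \<exists>\<delta>. \<delta> \<longlonglongrightarrow> 0 \<and> (\<forall>J. 0 \<le> \<delta> J) \<and> (\<forall>J\<ge>k. \<forall>s\<in>{0..T}. Mo a s - S J a s \<le> \<delta> J)"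
    by auto
  then obtain D where D: "\<And>a. a \<in> {..<m} \<Longrightarrow> D a \<longlonglongrightarrow> 0 \<and> (\<forall>J. 0 \<le> D a J) \<and> (\<forall>J\<ge>k. \<forall>s\<in>{0..T}. Mo a s - S J a s \<le> D a J)"
    by (metis bchoice)
  define C where "C = real (k + 1) ^ m * Mo (Suc m) T"
  define \<eta> where "\<eta> = (\<lambda>J. (\<Sum>a<m. kp m a * D a J) + Lam * (C / (real J + 1 - real k)))"
  define G1 where "G1 = T powr \<nu> / Gamma (\<nu> + 1)"
  define \<delta> where "\<delta> = (\<lambda>J. max 0 (\<eta> J) * G1)"
  have "\<eta> \<longlonglongrightarrow> (\<Sum>a<m. kp m a * 0) + Lam * 0"
    unfolding \<eta>_def
  proof (intro tendsto_add tendsto_sum tendsto_mult tendsto_const)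
    show "D a \<longlonglongrightarrow> 0" if "a \<in> {..<m}" for a using D[OF that] by blast
    show "(\<lambda>J. C / (real J + 1 - real k)) \<longlonglongrightarrow> 0" by real_asymp
  qed
  then have "\<eta> \<longlonglongrightarrow> 0" by simp
  then have "(\<lambda>J. max 0 (\<eta> J)) \<longlonglongrightarrow> max 0 0" by (intro tendsto_max tendsto_const)
  then have "\<delta> \<longlonglongrightarrow> 0 * G1" unfolding \<delta>_def by (intro tendsto_mult tendsto_const) simp
  then have lim: "\<delta> \<longlonglongrightarrow> 0" by simp
  have G1: "0 \<le> G1" unfolding G1_def using Gnz[of 1] by simp
  have bound: "Mo m s - S J m s \<le> \<delta> J" if J: "k \<le> J" and s: "s \<in> {0..T}" for J s
  proof -
    define w where "w = (\<lambda>x::real. (x powr \<nu>) ^ 1 / Gamma (real 1 * \<nu> + 1))"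
    define h1 where "h1 = (\<lambda>x. 1 * Mo m x + (-1) * S J m x)"
    define g where "g = (\<lambda>x. 1 * h1 x + (- \<eta> J) * w x)"
    have okg: "cap_ok \<nu> g x \<and> caputo \<nu> g x = caputo \<nu> (Mo m) x - caputo \<nu> (S J m) x - \<eta> J" if x: "0 < x" for x
    proof -
      have w: "cap_ok \<nu> w x \<and> caputo \<nu> w x = 1" unfolding w_def using cap_term[OF nu x, of 1] by simp
      have h1: "cap_ok \<nu> h1 x \<and> caputo \<nu> h1 x = caputo \<nu> (Mo m) x - caputo \<nu> (S J m) x"
        unfolding h1_def using cap_lin2[OF nu(2) x, of "Mo m" "S J m" 1 "-1"] S_cap[OF x] Mo_cap[OF x] by simp
      show ?thesis
        unfolding g_def using cap_lin2[OF nu(2) x, of h1 w 1 "- \<eta> J"] h1 w by simp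
    qed
    have "g s \<le> 0"
    proof (rule CP[OF nu, of T g s])
      show "continuous_on {0..T} g" unfolding g_def h1_def w_def
        using Gnz[of 1]
        by (intro continuous_intros continuous_on_subset[OF S_cont] continuous_on_subset[OF Mo_cont]
            continuous_on_subset[OF powr_cont]) auto
      show "g 0 = 0" unfolding g_def h1_def w_def using nu by (simp add: S_0 Mo_0)
      fix x assume x: "x \<in> {0<..T}"
      show "cap_ok \<nu> g x" using okg x by auto
      have Sup: "S J (Suc m) x \<le> Mo (Suc m) T"
        using S_le_Mo[of x J "Suc m"] Mo_mono[of x T "Suc m"] x by auto
      have "Tl J m x \<le> real (k + 1) ^ m / (real J + 1 - real k) * S J (Suc m) x"
        using Tl_bound[OF J, of x m] x by simp
      also have "\<dots> \<le> real (k + 1) ^ m / (real J + 1 - real k) * Mo (Suc m) T"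
        using J Sup by (intro mult_left_mono) auto
      finally have Tl: "Tl J m x \<le> C / (real J + 1 - real k)" unfolding C_def by simp
      have "caputo \<nu> g x \<le> (\<Sum>a<m. kp m a * Mo a x) - ((\<Sum>a<m. kp m a * S J a x) - Lam * Tl J m x) - \<eta> J"
        using okg[of x] x S_lower[where s=x and J=J and m=m] Mo_cap[of x m] by auto
      also have "\<dots> = (\<Sum>a<m. kp m a * (Mo a x - S J a x)) + Lam * Tl J m x - \<eta> J"
        by (simp add: right_diff_distrib sum_subtractf)
      also have "\<dots> \<le> (\<Sum>a<m. kp m a * D a J) + Lam * (C / (real J + 1 - real k)) - \<eta> J"
      proof -
        have "(\<Sum>a<m. kp m a * (Mo a x - S J a x)) \<le> (\<Sum>a<m. kp m a * D a J)"
          using D x J by (intro sum_mono mult_left_mono kp_nonneg) auto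
        moreover have "Lam * Tl J m x \<le> Lam * (C / (real J + 1 - real k))"
          using Tl Lam_nonneg by (intro mult_left_mono) auto
        ultimately show ?thesis by simp
      qed
      also have "\<dots> = 0" unfolding \<eta>_def by simp
      finally show "caputo \<nu> g x \<le> 0" .
    qed (use s in auto)
    then have "Mo m s - S J m s \<le> \<eta> J * w s" unfolding g_def h1_def by simp
    also have "\<dots> \<le> max 0 (\<eta> J) * w s"
      using Gnz[of 1] unfolding w_def by (intro mult_right_mono) auto
    also have "\<dots> \<le> max 0 (\<eta> J) * G1"
    proof (rule mult_left_mono)
      have g: "0 < Gamma (\<nu> + 1)" using Gnz[of 1] by simp
      have "s powr \<nu> \<le> T powr \<nu>" using s nu by (intro powr_mono2) auto
      then show "w s \<le> G1" unfolding w_def G1_def using g by (simp add: divide_right_mono)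
    qed simp
    finally show ?thesis unfolding \<delta>_def .
  qed
  show ?case using lim G1 bound unfolding \<delta>_def by (intro exI[of _ \<delta>]) (auto simp: \<delta>_def)
qed

lemma main: assumes t: "0 \<le> t" shows "(\<lambda>j. real j ^ m * p j t) sums Mo m t"
proof -
  obtain \<delta> where lim: "\<delta> \<longlonglongrightarrow> 0" and b: "\<And>J. k \<le> J \<Longrightarrow> Mo m t - S J m t \<le> \<delta> J"
    using lower[OF t, of m] t by auto
  have "(\<lambda>J. S J m t) \<longlonglongrightarrow> Mo m t"
  proof (rule tendsto_sandwich[of "\<lambda>J. Mo m t - \<delta> J" _ _ "\<lambda>J. Mo m t"])
    show "eventually (\<lambda>J. Mo m t - \<delta> J \<le> S J m t) sequentially"
      using b by (intro eventually_sequentiallyI[of k]) force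
    show "eventually (\<lambda>J. S J m t \<le> Mo m t) sequentially"
      using S_le_Mo[OF t] by simp
    show "(\<lambda>J. Mo m t - \<delta> J) \<longlonglongrightarrow> Mo m t"
      using tendsto_diff[OF tendsto_const lim, of "Mo m t"] by simp
  qed simp
  then have "(\<lambda>n. \<Sum>j<Suc n. real j ^ m * p j t) \<longlonglongrightarrow> Mo m t"
    unfolding S_def by (simp add: lessThan_Suc_atMost)
  then show ?thesis unfolding sums_def by (rule LIMSEQ_imp_Suc)
qed

end

theorem lemma4p1:
  fixes \<nu> :: real and k :: nat and lam :: "nat \<Rightarrow> real"
    and p :: "nat \<Rightarrow> real \<Rightarrow> real" and m :: nat and t :: real
  assumes nu: "0 < \<nu>" "\<nu> \<le> 1"
    and k: "1 \<le> k"
    and lam_pos: "\<And>l. l \<in> {1..k} \<Longrightarrow> 0 < lam l"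
    and prob_nonneg: "\<And>j s. 0 \<le> s \<Longrightarrow> 0 \<le> p j s"
    and prob_sum: "\<And>s. 0 \<le> s \<Longrightarrow> (\<lambda>j. p j s) sums 1"
    and cont: "\<And>j. continuous_on {0..} (p j)"
    and diff: "\<And>j s. 0 < s \<Longrightarrow> p j differentiable (at s)"
    and integr: "\<And>j s. \<nu> < 1 \<Longrightarrow> 0 < s \<Longrightarrow>
                   (\<lambda>u. deriv (p j) u / (s - u) powr \<nu>) integrable_on {0..s}"
    and eq0: "\<And>s. 0 < s \<Longrightarrow> caputo \<nu> (p 0) s = - (\<Sum>l=1..k. lam l) * p 0 s"
    and eq_low: "\<And>j s. 1 \<le> j \<Longrightarrow> j \<le> k - 1 \<Longrightarrow> 0 < s \<Longrightarrow>
                   caputo \<nu> (p j) s = (\<Sum>r=1..j. lam r * p (j - r) s) - (\<Sum>l=1..k. lam l) * p j s"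
    and eq_high: "\<And>j s. k \<le> j \<Longrightarrow> 0 < s \<Longrightarrow>
                   caputo \<nu> (p j) s = (\<Sum>r=1..k. lam r * p (j - r) s) - (\<Sum>l=1..k. lam l) * p j s"
    and init0: "p 0 0 = 1"
    and initj: "\<And>j. 1 \<le> j \<Longrightarrow> p j 0 = 0"
    and t: "0 \<le> t"
  shows "(\<lambda>j. real j ^ m * p j t) sums
     (\<Sum>r=0..m. (t powr \<nu>) ^ r / Gamma (real r * \<nu> + 1) *
        (\<Sum>i\<in>compositions k r. multinom k r i * (\<Prod>l=1..k. lam l ^ i l) *
           (\<Sum>n\<in>compositions k m. multinom k m n *
              (\<Prod>l=1..k. (deriv ^^ n l) (\<lambda>s. (exp (real l * s) - 1) ^ i l) 0))))"
proof -
  interpret fsys \<nu> k lam p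
    by unfold_locales (fact nu k lam_pos prob_nonneg cont diff integr eq0 eq_low eq_high init0 initj)+
  have e: "(\<Sum>r=0..m. (t powr \<nu>) ^ r / Gamma (real r * \<nu> + 1) *
        (\<Sum>i\<in>compositions k r. multinom k r i * (\<Prod>l=1..k. lam l ^ i l) *
           (\<Sum>n\<in>compositions k m. multinom k m n *
              (\<Prod>l=1..k. (deriv ^^ n l) (\<lambda>s. (exp (real l * s) - 1) ^ i l) 0)))) =
      (\<Sum>r=0..m. (t powr \<nu>) ^ r / Gamma (real r * \<nu> + 1) * cc k lam r m)"
    unfolding cc_def by (rule refl)
  also have "\<dots> = Mo m t"
    unfolding Mo_def pw_def cc_dG atLeast0AtMost by (simp add: mult_ac)
  finally show ?thesis using main[OF t] by simp
qed

end
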